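(* Let $\mathcal{C}$ be a d-category and $X$ a $\mathcal{C}$-automaton. A track object $\Gamma$ belongs to $\mathrm{Lang}(X)$ if and only if $\Gamma\cong\widehat{\pi_X\circ\alpha}$ (as $\mathcal{C}$-automata) for some accepting path $\alpha$ in $X$. That is, $\mathrm{Lang}(X)=\{\widehat{\pi_X\circ\alpha}\mid\alpha\text{ accepting path in }X\}$ up to isomorphism.
   Context: A d-category is a small category $\mathcal{C}$ with wide subcategories $\mathcal{C}^+$ (formorphisms) and $\mathcal{C}^-$ (backmorphisms) such that an invertible $\varphi$ is in $\mathcal{C}^+$ iff $\varphi^{-1}\in\mathcal{C}^-$; d-functors preserve both. A $\mathcal{C}$-presheaf is a functor $X:\mathcal{C}^{op}\to\mathbf{Set}$; $\mathsf{E}X$ is its category of elements (objects $(U,x)$, $x\in X[U]$; morphisms $(V,y)\to(U,x)$ the $\varphi:V\to U$ with $X[\varphi](x)=y$), with projection $\pi_X$ and d-structure: a morphism is a for-/backmorphism iff its image under $\pi_X$ is. A $\mathcal{C}$-automaton is a presheaf $X$ with sets $\bot_X,\top_X$ of elements (start, accept); morphisms of automata are presheaf maps preserving them. A linear category is a bipointed d-category isomorphic to a finite (possibly empty) concatenation (gluing $\top$ to $\bot$) of $\mathbf S$ (formorphism $\bot\to\top$), $\mathbf T$ (backmorphism $\top\to\bot$), $\mathbf I$ (inverse pair). A path in a d-category $\mathcal D$ is a d-functor $\omega:\mathcal I\to\mathcal D$ from a linear category; a path in $X$ is a path in $\mathsf{E}X$, accepting if $\alpha(\bot_{\mathcal I})\in\bot_X$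 and $\alpha(\top_{\mathcal I})\in\top_X$. The track object of a path $\omega$ in $\mathcal{C}$ is $\widehat\omega=\operatorname{colim}_{i}\mathcal{C}(-,\omega(i))$ with single start element the image of $\mathrm{id}_{\omega(\bot)}$ and single accept element the image of $\mathrm{id}_{\omega(\top)}$; a track object is an automaton isomorphic to some $\widehat\omega$. $\mathrm{Lang}(X)$ is the class of track objects $\Gamma$ admitting a morphism of $\mathcal{C}$-automata $\Gamma\to X$. *)

theory Defs
  imports Main
begin

record ('o, 'm) dcat =
  obj  :: "'o set"
  arr  :: "'m set"
  sdom :: "'m \<Rightarrow> 'o"
  scod :: "'m \<Rightarrow> 'o"
  idt  :: "'o \<Rightarrow> 'm"
  cmp  :: "'m \<Rightarrow> 'm \<Rightarrow> 'm"   (* cmp g f = g \<circ> f, defined when scod f = sdom g *)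
  fwd  :: "'m set"
  bwd  :: "'m set"

definition hom :: "('o, 'm, 'z) dcat_scheme \<Rightarrow> 'o \<Rightarrow> 'o \<Rightarrow> 'm set" where
  "hom C a b = {f \<in> arr C. sdom C f = a \<and> scod C f = b}"

definition category :: "('o, 'm, 'z) dcat_scheme \<Rightarrow> bool" where
  "category C \<longleftrightarrow>
     (\<forall>f\<in>arr C. sdom C f \<in> obj C \<and> scod C f \<in> obj C) \<and>
     (\<forall>a\<in>obj C. idt C a \<in> hom C a a) \<and>
     (\<forall>f\<in>arr C. \<forall>g\<in>arr C. scod C f = sdom C g \<longrightarrow>
         cmp C g f \<in> hom C (sdom C f) (scod C g)) \<and>
     (\<forall>f\<in>arr C. cmp C f (idt C (sdom C f)) = f \<and> cmp C (idt C (scod C f)) f = f) \<and>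
     (\<forall>f\<in>arr C. \<forall>g\<in>arr C. \<forall>h\<in>arr C. scod C f = sdom C g \<longrightarrow> scod C g = sdom C h \<longrightarrow>
         cmp C h (cmp C g f) = cmp C (cmp C h g) f)"

definition inverse_pair :: "('o, 'm, 'z) dcat_scheme \<Rightarrow> 'm \<Rightarrow> 'm \<Rightarrow> bool" where
  "inverse_pair C f g \<longleftrightarrow> f \<in> arr C \<and> g \<in> arr C \<and>
     scod C f = sdom C g \<and> scod C g = sdom C f \<and>
     cmp C g f = idt C (sdom C f) \<and> cmp C f g = idt C (sdom C g)"

definition wide_subcat :: "('o, 'm, 'z) dcat_scheme \<Rightarrow> 'm set \<Rightarrow> bool" where
  "wide_subcat C S \<longleftrightarrow> S \<subseteq> arr C \<and> (\<forall>a\<in>obj C. idt C a \<in> S) \<and>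
     (\<forall>f\<in>S. \<forall>g\<in>S. scod C f = sdom C g \<longrightarrow> cmp C g f \<in> S)"

definition dcategory :: "('o, 'm, 'z) dcat_scheme \<Rightarrow> bool" where
  "dcategory C \<longleftrightarrow> category C \<and> wide_subcat C (fwd C) \<and> wide_subcat C (bwd C) \<and>
     (\<forall>f g. inverse_pair C f g \<longrightarrow> (f \<in> fwd C \<longleftrightarrow> g \<in> bwd C))"

definition dfunctor ::
  "('o, 'm, 'z) dcat_scheme \<Rightarrow> ('p, 'n, 'w) dcat_scheme \<Rightarrow> ('o \<Rightarrow> 'p) \<Rightarrow> ('m \<Rightarrow> 'n) \<Rightarrow> bool" where
  "dfunctor C D Fo Fa \<longleftrightarrow>
     (\<forall>a\<in>obj C. Fo a \<in> obj D) \<and>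
     (\<forall>f\<in>arr C. Fa f \<in> hom D (Fo (sdom C f)) (Fo (scod C f))) \<and>
     (\<forall>a\<in>obj C. Fa (idt C a) = idt D (Fo a)) \<and>
     (\<forall>f\<in>arr C. \<forall>g\<in>arr C. scod C f = sdom C g \<longrightarrow> Fa (cmp C g f) = cmp D (Fa g) (Fa f)) \<and>
     (\<forall>f\<in>fwd C. Fa f \<in> fwd D) \<and> (\<forall>f\<in>bwd C. Fa f \<in> bwd D)"

datatype letter = S | T | I

text \<open>The concatenation of the word w of copies of S, T, I: objects 0..length w
  (bottom = 0, top = length w); it is thin, the unique morphism i -> j being the pair (i,j).
  In S the morphism bot->top is a formorphism, in T the morphism top->bot is a backmorphism,
  in I the morphism bot->top is a formorphism and its inverse top->bot a backmorphism.\<close>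
definition lin :: "letter list \<Rightarrow> (nat, nat \<times> nat) dcat" where
  "lin w = (let n = length w;
               A = {(i, j). i \<le> n \<and> j \<le> n \<and>
                    ((i \<le> j \<and> (\<forall>k. i \<le> k \<and> k < j \<longrightarrow> w ! k \<in> {S, I})) \<or>
                     (j \<le> i \<and> (\<forall>k. j \<le> k \<and> k < i \<longrightarrow> w ! k \<in> {T, I})))}
           in \<lparr> obj = {0..n}, arr = A, sdom = fst, scod = snd, idt = (\<lambda>i. (i, i)),
                cmp = (\<lambda>g f. (fst f, snd g)),
                fwd = {(i, j) \<in> A. i \<le> j}, bwd = {(i, j) \<in> A. j \<le> i} \<rparr>)"

definition is_path :: "('o, 'm, 'z) dcat_scheme \<Rightarrow> letter list \<Rightarrow> (nat \<Rightarrow> 'o) \<Rightarrow> (nat \<times> nat \<Rightarrow> 'm) \<Rightarrow> bool" where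
  "is_path D w Fo Fa \<longleftrightarrow> dfunctor (lin w) D Fo Fa"

record ('o, 'm, 'x) automaton =
  elts  :: "'o \<Rightarrow> 'x set"
  act   :: "'m \<Rightarrow> 'x \<Rightarrow> 'x"         (* X[phi] : X[cod phi] -> X[dom phi] *)
  start :: "('o \<times> 'x) set"
  accept :: "('o \<times> 'x) set"

definition presheaf :: "('o, 'm, 'z) dcat_scheme \<Rightarrow> ('o, 'm, 'x) automaton \<Rightarrow> bool" where
  "presheaf C X \<longleftrightarrow>
     (\<forall>f\<in>arr C. \<forall>x\<in>elts X (scod C f). act X f x \<in> elts X (sdom C f)) \<and>
     (\<forall>a\<in>obj C. \<forall>x\<in>elts X a. act X (idt C a) x = x) \<and>
     (\<forall>f\<in>arr C. \<forall>g\<in>arr C. scod C f = sdom C g \<longrightarrow>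
        (\<forall>x\<in>elts X (scod C g). act X (cmp C g f) x = act X f (act X g x)))"

definition elements :: "('o, 'm, 'z) dcat_scheme \<Rightarrow> ('o, 'm, 'x) automaton \<Rightarrow> ('o \<times> 'x) set" where
  "elements C X = {(U, x). U \<in> obj C \<and> x \<in> elts X U}"

definition is_automaton :: "('o, 'm, 'z) dcat_scheme \<Rightarrow> ('o, 'm, 'x) automaton \<Rightarrow> bool" where
  "is_automaton C X \<longleftrightarrow> presheaf C X \<and> start X \<subseteq> elements C X \<and> accept X \<subseteq> elements C X"

definition aut_hom ::
  "('o, 'm, 'z) dcat_scheme \<Rightarrow> ('o, 'm, 'x) automaton \<Rightarrow> ('o, 'm, 'y) automaton \<Rightarrow> ('o \<Rightarrow> 'x \<Rightarrow> 'y) \<Rightarrow> bool" where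
  "aut_hom C X Y \<eta> \<longleftrightarrow> is_automaton C X \<and> is_automaton C Y \<and>
     (\<forall>U\<in>obj C. \<forall>x\<in>elts X U. \<eta> U x \<in> elts Y U) \<and>
     (\<forall>f\<in>arr C. \<forall>x\<in>elts X (scod C f). \<eta> (sdom C f) (act X f x) = act Y f (\<eta> (scod C f) x)) \<and>
     (\<forall>(U, x)\<in>start X. (U, \<eta> U x) \<in> start Y) \<and>
     (\<forall>(U, x)\<in>accept X. (U, \<eta> U x) \<in> accept Y)"

definition aut_iso :: "('o, 'm, 'z) dcat_scheme \<Rightarrow> ('o, 'm, 'x) automaton \<Rightarrow> ('o, 'm, 'y) automaton \<Rightarrow> bool" where
  "aut_iso C X Y \<longleftrightarrow> (\<exists>\<eta> \<theta>. aut_hom C X Y \<eta> \<and> aut_hom C Y X \<theta> \<and>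
     (\<forall>U\<in>obj C. (\<forall>x\<in>elts X U. \<theta> U (\<eta> U x) = x) \<and> (\<forall>y\<in>elts Y U. \<eta> U (\<theta> U y) = y)))"

definition elcat :: "('o, 'm, 'z) dcat_scheme \<Rightarrow> ('o, 'm, 'x) automaton \<Rightarrow> ('o \<times> 'x, 'm \<times> 'x) dcat" where
  "elcat C X = (let A = {(f, x). f \<in> arr C \<and> x \<in> elts X (scod C f)} in
     \<lparr> obj = elements C X, arr = A,
       sdom = (\<lambda>(f, x). (sdom C f, act X f x)), scod = (\<lambda>(f, x). (scod C f, x)),
       idt = (\<lambda>(U, x). (idt C U, x)),
       cmp = (\<lambda>(g, x) (f, y). (cmp C g f, x)),
       fwd = {(f, x) \<in> A. f \<in> fwd C}, bwd = {(f, x) \<in> A. f \<in> bwd C} \<rparr>)"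

definition accepting_path ::
  "('o, 'm, 'z) dcat_scheme \<Rightarrow> ('o, 'm, 'x) automaton \<Rightarrow> letter list \<Rightarrow> (nat \<Rightarrow> 'o \<times> 'x) \<Rightarrow> (nat \<times> nat \<Rightarrow> 'm \<times> 'x) \<Rightarrow> bool" where
  "accepting_path C X w Ao Aa \<longleftrightarrow> is_path (elcat C X) w Ao Aa \<and>
     Ao 0 \<in> start X \<and> Ao (length w) \<in> accept X"

text \<open>The colimit of the representables C(-, omega(i)), computed pointwise:
  at U, the quotient of the disjoint union of the C(U, omega i) by the equivalence
  relation generated by (i, f) ~ (j, omega(g) o f) for g : i -> j in the linear category.\<close>
definition tr_gen :: "('o, 'm, 'z) dcat_scheme \<Rightarrow> letter list \<Rightarrow> (nat \<Rightarrow> 'o) \<Rightarrow> 'o \<Rightarrow> (nat \<times> 'm) set" where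
  "tr_gen C w Fo U = {(i, f). i \<le> length w \<and> f \<in> hom C U (Fo i)}"

definition tr_step :: "('o, 'm, 'z) dcat_scheme \<Rightarrow> letter list \<Rightarrow> (nat \<Rightarrow> 'o) \<Rightarrow> (nat \<times> nat \<Rightarrow> 'm) \<Rightarrow> 'o \<Rightarrow> ((nat \<times> 'm) \<times> (nat \<times> 'm)) set" where
  "tr_step C w Fo Fa U = {((i, f), (j, h)). (i, f) \<in> tr_gen C w Fo U \<and>
      (i, j) \<in> arr (lin w) \<and> h = cmp C (Fa (i, j)) f}"

definition tr_rel :: "('o, 'm, 'z) dcat_scheme \<Rightarrow> letter list \<Rightarrow> (nat \<Rightarrow> 'o) \<Rightarrow> (nat \<times> nat \<Rightarrow> 'm) \<Rightarrow> 'o \<Rightarrow> ((nat \<times> 'm) \<times> (nat \<times> 'm)) set" where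
  "tr_rel C w Fo Fa U = (tr_step C w Fo Fa U \<union> (tr_step C w Fo Fa U)\<inverse>)\<^sup>*"

definition track :: "('o, 'm, 'z) dcat_scheme \<Rightarrow> letter list \<Rightarrow> (nat \<Rightarrow> 'o) \<Rightarrow> (nat \<times> nat \<Rightarrow> 'm) \<Rightarrow> ('o, 'm, (nat \<times> 'm) set) automaton" where
  "track C w Fo Fa =
     \<lparr> elts = (\<lambda>U. tr_gen C w Fo U // tr_rel C w Fo Fa U),
       act = (\<lambda>\<phi> c. (\<Union>(i, f)\<in>c. tr_rel C w Fo Fa (sdom C \<phi>) `` {(i, cmp C f \<phi>)})),
       start = {(Fo 0, tr_rel C w Fo Fa (Fo 0) `` {(0, idt C (Fo 0))})},
       accept = {(Fo (length w), tr_rel C w Fo Fa (Fo (length w)) `` {(length w, idt C (Fo (length w)))})} \<rparr>"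

definition is_track_object :: "('o, 'm, 'z) dcat_scheme \<Rightarrow> ('o, 'm, 'y) automaton \<Rightarrow> bool" where
  "is_track_object C G \<longleftrightarrow> (\<exists>w Fo Fa. is_path C w Fo Fa \<and> aut_iso C G (track C w Fo Fa))"

definition in_Lang :: "('o, 'm, 'z) dcat_scheme \<Rightarrow> ('o, 'm, 'x) automaton \<Rightarrow> ('o, 'm, 'y) automaton \<Rightarrow> bool" where
  "in_Lang C X G \<longleftrightarrow> is_track_object C G \<and> (\<exists>\<eta>. aut_hom C G X \<eta>)"

end

theory Submission
  imports Defs
begin

lemma lin_fields:
  "obj (lin w) = {0..length w}"
  "sdom (lin w) = fst" "scod (lin w) = snd" "idt (lin w) = (\<lambda>i. (i,i))"
  "cmp (lin w) = (\<lambda>g f. (fst f, snd g))"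
  by (simp_all add: lin_def Let_def)

lemma lin_arr_le: "(i,j) \<in> arr (lin w) \<Longrightarrow> i \<le> length w \<and> j \<le> length w"
  by (simp add: lin_def Let_def)

lemma lin_fwd: "fwd (lin w) \<subseteq> arr (lin w)" "bwd (lin w) \<subseteq> arr (lin w)"
  by (auto simp: lin_def Let_def)

lemma elcat_fields:
  "obj (elcat C X) = elements C X"
  "arr (elcat C X) = {(f, x). f \<in> arr C \<and> x \<in> elts X (scod C f)}"
  "sdom (elcat C X) = (\<lambda>(f, x). (sdom C f, act X f x))"
  "scod (elcat C X) = (\<lambda>(f, x). (scod C f, x))"
  "idt (elcat C X) = (\<lambda>(U, x). (idt C U, x))"
  "cmp (elcat C X) = (\<lambda>(g, x) (f, y). (cmp C g f, x))"
  "fwd (elcat C X) = {(f, x). f \<in> arr C \<and> x \<in> elts X (scod C f) \<and> f \<in> fwd C}"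
  "bwd (elcat C X) = {(f, x). f \<in> arr C \<and> x \<in> elts X (scod C f) \<and> f \<in> bwd C}"
  by (auto simp: elcat_def Let_def)

lemma tr_rel_sym: "(p,q) \<in> tr_rel C w Fo Fa U \<Longrightarrow> (q,p) \<in> tr_rel C w Fo Fa U"
  unfolding tr_rel_def
  by (metis converse_Un converse_converse rtrancl_converseI sup_commute)

lemma tr_rel_trans: "(p,q) \<in> tr_rel C w Fo Fa U \<Longrightarrow> (q,r) \<in> tr_rel C w Fo Fa U \<Longrightarrow> (p,r) \<in> tr_rel C w Fo Fa U"
  unfolding tr_rel_def by (rule rtrancl_trans)

lemma tr_rel_refl: "(p,p) \<in> tr_rel C w Fo Fa U"
  unfolding tr_rel_def by simp

lemma tr_cls_eq: "z \<in> tr_rel C w Fo Fa U `` {a} \<Longrightarrow> tr_rel C w Fo Fa U `` {z} = tr_rel C w Fo Fa U `` {a}"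
proof -
  assume z: "z \<in> tr_rel C w Fo Fa U `` {a}"
  hence az: "(a,z) \<in> tr_rel C w Fo Fa U" by simp
  show ?thesis
  proof (rule set_eqI)
    fix y show "y \<in> tr_rel C w Fo Fa U `` {z} \<longleftrightarrow> y \<in> tr_rel C w Fo Fa U `` {a}"
      using az tr_rel_trans[of a z _ _ _ _ _ y] tr_rel_trans[of z a _ _ _ _ _ y] tr_rel_sym[OF az] by auto
  qed
qed

lemma cat_facts:
  assumes "category C"
  shows "f \<in> arr C \<Longrightarrow> sdom C f \<in> obj C \<and> scod C f \<in> obj C"
    and "a \<in> obj C \<Longrightarrow> idt C a \<in> arr C \<and> sdom C (idt C a) = a \<and> scod C (idt C a) = a"
    and "f \<in> arr C \<Longrightarrow> g \<in> arr C \<Longrightarrow> scod C f = sdom C g \<Longrightarrow>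
          cmp C g f \<in> arr C \<and> sdom C (cmp C g f) = sdom C f \<and> scod C (cmp C g f) = scod C g"
    and "f \<in> arr C \<Longrightarrow> cmp C f (idt C (sdom C f)) = f"
    and "f \<in> arr C \<Longrightarrow> cmp C (idt C (scod C f)) f = f"
    and "f \<in> arr C \<Longrightarrow> g \<in> arr C \<Longrightarrow> h \<in> arr C \<Longrightarrow> scod C f = sdom C g \<Longrightarrow> scod C g = sdom C h \<Longrightarrow>
         cmp C h (cmp C g f) = cmp C (cmp C h g) f"
  using assms unfolding category_def hom_def by blast+

lemma psh_facts:
  assumes "presheaf C X"
  shows "f \<in> arr C \<Longrightarrow> x \<in> elts X (scod C f) \<Longrightarrow> act X f x \<in> elts X (sdom C f)"
    and "a \<in> obj C \<Longrightarrow> x \<in> elts X a \<Longrightarrow> act X (idt C a) x = x"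
    and "f \<in> arr C \<Longrightarrow> g \<in> arr C \<Longrightarrow> scod C f = sdom C g \<Longrightarrow> x \<in> elts X (scod C g) \<Longrightarrow>
         act X (cmp C g f) x = act X f (act X g x)"
  using assms unfolding presheaf_def by blast+

lemma aut_hom_comp:
  assumes "category C" "aut_hom C X Y \<eta>" "aut_hom C Y Z \<zeta>"
  shows "aut_hom C X Z (\<lambda>U x. \<zeta> U (\<eta> U x))"
  using assms unfolding aut_hom_def
  apply (intro conjI)
  apply blast
  apply blast
  apply blast
  subgoal by (smt (verit) cat_facts(1))
  apply fast
  apply fast
  done


lemma path_to_hom:
  assumes C: "category C" and X: "is_automaton C X"
    and P: "dfunctor (lin w) (elcat C X) Ao Aa"
    and st: "Ao 0 \<in> start X" and ac: "Ao (length w) \<in> accept X"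
    and Tr: "is_automaton C (track C w (fst \<circ> Ao) (fst \<circ> Aa))"
  shows "\<exists>\<eta>. aut_hom C (track C w (fst \<circ> Ao) (fst \<circ> Aa)) X \<eta>"
proof -
  define Fo where "Fo = fst \<circ> Ao"
  define Fa where "Fa = fst \<circ> Aa"
  define xs where "xs = snd \<circ> Ao"
  define v where "v = (\<lambda>(i::nat, f). act X f (xs i))"
  define R where "R = tr_rel C w Fo Fa"
  define n where "n = length w"
  have PX: "presheaf C X" using X by (simp add: is_automaton_def)
  have F1: "Fo i \<in> obj C \<and> xs i \<in> elts X (Fo i)" if "i \<le> n" for i
  proof -
    have "Ao i \<in> elements C X" using P that unfolding dfunctor_def by (simp add: lin_fields elcat_fields n_def)
    thus ?thesis by (auto simp: elements_def Fo_def xs_def)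
  qed
  have F2: "Fa (i,j) \<in> arr C \<and> sdom C (Fa (i,j)) = Fo i \<and> scod C (Fa (i,j)) = Fo j
       \<and> act X (Fa (i,j)) (xs j) = xs i" if ij: "(i,j) \<in> arr (lin w)" for i j
  proof -
    have "Aa (i,j) \<in> hom (elcat C X) (Ao i) (Ao j)" using P ij unfolding dfunctor_def
      by (auto simp: lin_fields)
    moreover obtain \<phi> x where ax: "Aa (i,j) = (\<phi>, x)" by fastforce
    ultimately have "\<phi> \<in> arr C" "x \<in> elts X (scod C \<phi>)" "Ao i = (sdom C \<phi>, act X \<phi> x)" "Ao j = (scod C \<phi>, x)"
      by (auto simp: hom_def elcat_fields)
    thus ?thesis using ax by (simp add: Fa_def Fo_def xs_def)
  qed
  have F3: "q \<in> tr_gen C w Fo U \<and> v q = v p" if "(p,q) \<in> tr_step C w Fo Fa U" for p q U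
  proof -
    obtain i f j h where pq: "p = (i,f)" "q = (j,h)" by fastforce
    with that have g: "(i,f) \<in> tr_gen C w Fo U" and ij: "(i,j) \<in> arr (lin w)" and h: "h = cmp C (Fa (i,j)) f"
      by (auto simp: tr_step_def)
    from g have f: "f \<in> arr C" "sdom C f = U" "scod C f = Fo i" by (auto simp: tr_gen_def hom_def)
    note F2[OF ij]
    have "h \<in> arr C \<and> sdom C h = U \<and> scod C h = Fo j" using cat_facts(3)[OF C, of f "Fa (i,j)"] f F2[OF ij] h by auto
    moreover have "j \<le> length w" using lin_arr_le[OF ij] by simp
    ultimately have "(j,h) \<in> tr_gen C w Fo U" by (simp add: tr_gen_def hom_def)
    moreover have "act X h (xs j) = act X f (xs i)"
    proof -
      have "xs j \<in> elts X (Fo j)" using F1 lin_arr_le[OF ij] n_def by simp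
      thus ?thesis using psh_facts(3)[OF PX, of f "Fa (i,j)" "xs j"] f F2[OF ij] h by simp
    qed
    ultimately show ?thesis using pq by (simp add: v_def)
  qed
  have F4: "q \<in> tr_gen C w Fo U \<and> v q = v p" if "(p,q) \<in> R U" "p \<in> tr_gen C w Fo U" for p q U
    using that(1) unfolding R_def tr_rel_def
  proof (induction rule: rtrancl_induct)
    case base thus ?case using that(2) by simp
  next
    case (step y z)
    from step.hyps(2) show ?case
    proof
      assume "(y,z) \<in> tr_step C w Fo Fa U" thus ?thesis using F3 step.IH by metis
    next
      assume "(y,z) \<in> (tr_step C w Fo Fa U)\<inverse>"
      hence "(z,y) \<in> tr_step C w Fo Fa U" by simp
      moreover hence "z \<in> tr_gen C w Fo U" by (auto simp: tr_step_def)
      ultimately show ?thesis using F3 step.IH by metis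
    qed
  qed
  define \<eta> where "\<eta> = (\<lambda>(U::'a) c. v (SOME p. p \<in> c))"
  have E: "\<eta> U (R U `` {p}) = v p" if "p \<in> tr_gen C w Fo U" for U p
  proof -
    have "p \<in> R U `` {p}" by (simp add: R_def tr_rel_refl)
    hence "(SOME q. q \<in> R U `` {p}) \<in> R U `` {p}" by (rule someI)
    thus ?thesis using F4 that by (simp add: \<eta>_def)
  qed
  have "aut_hom C (track C w Fo Fa) X \<eta>"
    unfolding aut_hom_def
  proof (intro conjI)
    show "is_automaton C (track C w Fo Fa)" using Tr by (simp add: Fo_def Fa_def)
    show "is_automaton C X" by fact
    show "\<forall>U\<in>obj C. \<forall>x\<in>elts (track C w Fo Fa) U. \<eta> U x \<in> elts X U"
    proof (intro ballI)
      fix U c assume U: "U \<in> obj C" and c: "c \<in> elts (track C w Fo Fa) U"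
      then obtain p where p: "p \<in> tr_gen C w Fo U" "c = R U `` {p}"
        by (auto simp: track_def R_def elim!: quotientE)
      obtain i f where pif: "p = (i,f)" by fastforce
      have "f \<in> arr C" "sdom C f = U" "scod C f = Fo i" "i \<le> n" using p pif by (auto simp: tr_gen_def hom_def n_def)
      hence "act X f (xs i) \<in> elts X U" using psh_facts(1)[OF PX, of f "xs i"] F1 by auto
      thus "\<eta> U c \<in> elts X U" using E p pif by (simp add: v_def)
    qed
    show "\<forall>f\<in>arr C. \<forall>x\<in>elts (track C w Fo Fa) (scod C f).
            \<eta> (sdom C f) (act (track C w Fo Fa) f x) = act X f (\<eta> (scod C f) x)"
    proof (intro ballI)
      fix \<phi> c assume \<phi>: "\<phi> \<in> arr C" and c: "c \<in> elts (track C w Fo Fa) (scod C \<phi>)"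
      then obtain p where p: "p \<in> tr_gen C w Fo (scod C \<phi>)" "c = R (scod C \<phi>) `` {p}"
        by (auto simp: track_def R_def elim!: quotientE)
      obtain i f where pif: "p = (i,f)" by fastforce
      have f: "f \<in> arr C" "sdom C f = scod C \<phi>" "scod C f = Fo i" "i \<le> n" using p pif by (auto simp: tr_gen_def hom_def n_def)
      have TP: "presheaf C (track C w Fo Fa)" using Tr by (simp add: is_automaton_def Fo_def Fa_def)
      have ac: "act (track C w Fo Fa) \<phi> c \<in> elts (track C w Fo Fa) (sdom C \<phi>)"
        using psh_facts(1)[OF TP \<phi> c] .
      then obtain q where q: "q \<in> tr_gen C w Fo (sdom C \<phi>)" "act (track C w Fo Fa) \<phi> c = R (sdom C \<phi>) `` {q}"
        by (auto simp: track_def R_def elim!: quotientE)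
      have "(i, f) \<in> c" using p pif by (simp add: R_def tr_rel_refl)
      hence mem: "(i, cmp C f \<phi>) \<in> act (track C w Fo Fa) \<phi> c"
        unfolding track_def by (auto intro!: bexI[of _ "(i,f)"] simp: tr_rel_refl)
      have cf: "cmp C f \<phi> \<in> arr C \<and> sdom C (cmp C f \<phi>) = sdom C \<phi> \<and> scod C (cmp C f \<phi>) = Fo i"
        using cat_facts(3)[OF C \<phi> f(1)] f by simp
      hence g2: "(i, cmp C f \<phi>) \<in> tr_gen C w Fo (sdom C \<phi>)" using f by (simp add: tr_gen_def hom_def n_def)
      have "act (track C w Fo Fa) \<phi> c = R (sdom C \<phi>) `` {(i, cmp C f \<phi>)}"
        using tr_cls_eq[of "(i, cmp C f \<phi>)" C w Fo Fa "sdom C \<phi>" q] mem q by (simp add: R_def)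
      hence "\<eta> (sdom C \<phi>) (act (track C w Fo Fa) \<phi> c) = act X (cmp C f \<phi>) (xs i)"
        using E[OF g2] by (simp add: v_def)
      also have "\<dots> = act X \<phi> (act X f (xs i))"
        using psh_facts(3)[OF PX \<phi> f(1)] f F1 by simp
      also have "\<dots> = act X \<phi> (\<eta> (scod C \<phi>) c)" using E p pif by (simp add: v_def)
      finally show "\<eta> (sdom C \<phi>) (act (track C w Fo Fa) \<phi> c) = act X \<phi> (\<eta> (scod C \<phi>) c)" .
    qed
    have g0: "(i, idt C (Fo i)) \<in> tr_gen C w Fo (Fo i) \<and> \<eta> (Fo i) (R (Fo i) `` {(i, idt C (Fo i))}) = xs i"
      if "i \<le> n" for i
    proof -
      have o: "Fo i \<in> obj C" "xs i \<in> elts X (Fo i)" using F1 that by auto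
      hence g: "(i, idt C (Fo i)) \<in> tr_gen C w Fo (Fo i)"
        using cat_facts(2)[OF C o(1)] that by (simp add: tr_gen_def hom_def n_def)
      thus ?thesis using E[OF g] psh_facts(2)[OF PX o] by (simp add: v_def)
    qed
    have "Ao i = (Fo i, xs i)" for i by (simp add: Fo_def xs_def)
    then show "\<forall>(U, x)\<in>start (track C w Fo Fa). (U, \<eta> U x) \<in> start X"
      using g0[of 0] st by (simp add: track_def R_def)
    show "\<forall>(U, x)\<in>accept (track C w Fo Fa). (U, \<eta> U x) \<in> accept X"
      using g0[of n] ac \<open>\<And>i. Ao i = (Fo i, xs i)\<close> by (simp add: track_def R_def n_def)
  qed
  thus ?thesis by (auto simp: Fo_def Fa_def)
qed


lemma hom_to_path:
  assumes C: "category C" and P: "dfunctor (lin w) C Fo Fa"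
   and H: "aut_hom C (track C w Fo Fa) X \<eta>"
  defines "xs \<equiv> \<lambda>i. \<eta> (Fo i) (tr_rel C w Fo Fa (Fo i) `` {(i, idt C (Fo i))})"
  shows "accepting_path C X w (\<lambda>i. (Fo i, xs i)) (\<lambda>e. (Fa e, xs (snd e)))"
proof -
  define R where "R = tr_rel C w Fo Fa"
  define n where "n = length w"
  define c where "c = (\<lambda>i. R (Fo i) `` {(i, idt C (Fo i))})"
  have xs_c: "xs i = \<eta> (Fo i) (c i)" for i by (simp add: xs_def c_def R_def)
  have TA: "is_automaton C (track C w Fo Fa)" and XA: "is_automaton C X" using H by (auto simp: aut_hom_def)
  have TP: "presheaf C (track C w Fo Fa)" using TA by (simp add: is_automaton_def)
  have PX: "presheaf C X" using XA by (simp add: is_automaton_def)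
  have Hel: "\<And>U x. U \<in> obj C \<Longrightarrow> x \<in> elts (track C w Fo Fa) U \<Longrightarrow> \<eta> U x \<in> elts X U"
   and Hnat: "\<And>f x. f \<in> arr C \<Longrightarrow> x \<in> elts (track C w Fo Fa) (scod C f) \<Longrightarrow>
        \<eta> (sdom C f) (act (track C w Fo Fa) f x) = act X f (\<eta> (scod C f) x)"
    using H unfolding aut_hom_def by blast+
  have D1: "Fo i \<in> obj C" if "i \<le> n" for i using P that unfolding dfunctor_def by (simp add: lin_fields n_def)
  have D2: "Fa (i,j) \<in> arr C \<and> sdom C (Fa (i,j)) = Fo i \<and> scod C (Fa (i,j)) = Fo j"
    if "(i,j) \<in> arr (lin w)" for i j using P that unfolding dfunctor_def by (force simp: lin_fields hom_def)
  have gi: "(i, idt C (Fo i)) \<in> tr_gen C w Fo (Fo i)" if "i \<le> n" for i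
    using cat_facts(2)[OF C D1[OF that]] that by (simp add: tr_gen_def hom_def n_def)
  have ci: "c i \<in> elts (track C w Fo Fa) (Fo i)" if "i \<le> n" for i
    using gi[OF that] by (simp add: track_def c_def R_def quotientI)
  have xsel: "xs i \<in> elts X (Fo i)" if "i \<le> n" for i using Hel[OF D1[OF that] ci[OF that]] xs_c by simp
  have act_eq: "act X (Fa (i,j)) (xs j) = xs i" if ij: "(i,j) \<in> arr (lin w)" for i j
  proof -
    define \<phi> where "\<phi> = Fa (i,j)"
    have \<phi>: "\<phi> \<in> arr C" "sdom C \<phi> = Fo i" "scod C \<phi> = Fo j" using D2[OF ij] by (auto simp: \<phi>_def)
    have le: "i \<le> n" "j \<le> n" using lin_arr_le[OF ij] by (auto simp: n_def)
    have cj: "c j \<in> elts (track C w Fo Fa) (scod C \<phi>)" using ci[OF le(2)] \<phi> by simp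
    have a1: "act (track C w Fo Fa) \<phi> (c j) \<in> elts (track C w Fo Fa) (sdom C \<phi>)"
      using psh_facts(1)[OF TP \<phi>(1) cj] .
    then obtain q where q: "act (track C w Fo Fa) \<phi> (c j) = R (Fo i) `` {q}"
      using \<phi> by (auto simp: track_def R_def elim!: quotientE)
    have "(j, idt C (Fo j)) \<in> c j" by (simp add: c_def R_def tr_rel_refl)
    moreover have "cmp C (idt C (Fo j)) \<phi> = \<phi>" using cat_facts(5)[OF C \<phi>(1)] \<phi> by simp
    ultimately have m1: "(j, \<phi>) \<in> act (track C w Fo Fa) \<phi> (c j)"
      unfolding track_def using \<phi> by (auto intro!: bexI[of _ "(j, idt C (Fo j))"] simp: tr_rel_refl)
    have "((i, idt C (Fo i)), (j, \<phi>)) \<in> tr_step C w Fo Fa (Fo i)"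
      using gi[OF le(1)] ij cat_facts(4)[OF C \<phi>(1)] \<phi> by (simp add: tr_step_def \<phi>_def)
    hence m2: "(j, \<phi>) \<in> c i" unfolding c_def R_def tr_rel_def by (simp add: r_into_rtrancl)
    have "act (track C w Fo Fa) \<phi> (c j) = R (Fo i) `` {(j,\<phi>)}"
      using tr_cls_eq[of "(j,\<phi>)" C w Fo Fa "Fo i" q] m1 q by (simp add: R_def)
    also have "\<dots> = c i" using tr_cls_eq[of "(j,\<phi>)" C w Fo Fa "Fo i"] m2 by (simp add: c_def R_def)
    finally have "act (track C w Fo Fa) \<phi> (c j) = c i" .
    hence "\<eta> (Fo i) (c i) = act X \<phi> (\<eta> (Fo j) (c j))" using Hnat[OF \<phi>(1) cj] \<phi> by simp
    thus ?thesis by (simp add: xs_c \<phi>_def)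
  qed
  have "dfunctor (lin w) (elcat C X) (\<lambda>i. (Fo i, xs i)) (\<lambda>e. (Fa e, xs (snd e)))"
    unfolding dfunctor_def
  proof (intro conjI ballI impI)
    fix a assume "a \<in> obj (lin w)"
    hence "a \<le> n" by (simp add: lin_fields n_def)
    thus "(Fo a, xs a) \<in> obj (elcat C X)" using D1 xsel by (simp add: elcat_fields elements_def)
  next
    fix e assume e: "e \<in> arr (lin w)"
    obtain i j where ij: "e = (i,j)" by fastforce
    show "(Fa e, xs (snd e)) \<in> hom (elcat C X) (Fo (sdom (lin w) e), xs (sdom (lin w) e)) (Fo (scod (lin w) e), xs (scod (lin w) e))"
      using D2[of i j] act_eq[of i j] xsel[of j] lin_arr_le[of i j w] e ij
      by (simp add: hom_def elcat_fields lin_fields n_def)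
  next
    fix a assume "a \<in> obj (lin w)"
    show "(Fa (idt (lin w) a), xs (snd (idt (lin w) a))) = idt (elcat C X) (Fo a, xs a)"
      using P \<open>a \<in> obj (lin w)\<close> unfolding dfunctor_def by (simp add: lin_fields elcat_fields)
  next
    fix f g assume f: "f \<in> arr (lin w)" and g: "g \<in> arr (lin w)" and fg: "scod (lin w) f = sdom (lin w) g"
    have "Fa (cmp (lin w) g f) = cmp C (Fa g) (Fa f)" using P f g fg unfolding dfunctor_def by blast
    thus "(Fa (cmp (lin w) g f), xs (snd (cmp (lin w) g f))) = cmp (elcat C X) (Fa g, xs (snd g)) (Fa f, xs (snd f))"
      by (simp add: lin_fields elcat_fields)
  next
    fix e assume e: "e \<in> fwd (lin w)"
    obtain i j where ij: "e = (i,j)" by fastforce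
    have ea: "e \<in> arr (lin w)" using e lin_fwd by blast
    have "Fa e \<in> fwd C" using P e unfolding dfunctor_def by blast
    thus "(Fa e, xs (snd e)) \<in> fwd (elcat C X)"
      using D2[of i j] xsel[of j] lin_arr_le[of i j w] ea ij by (simp add: elcat_fields n_def)
  next
    fix e assume e: "e \<in> bwd (lin w)"
    obtain i j where ij: "e = (i,j)" by fastforce
    have ea: "e \<in> arr (lin w)" using e lin_fwd by blast
    have "Fa e \<in> bwd C" using P e unfolding dfunctor_def by blast
    thus "(Fa e, xs (snd e)) \<in> bwd (elcat C X)"
      using D2[of i j] xsel[of j] lin_arr_le[of i j w] ea ij by (simp add: elcat_fields n_def)
  qed
  moreover have "(Fo 0, xs 0) \<in> start X"
    using H unfolding aut_hom_def by (simp add: track_def xs_def)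
  moreover have "(Fo (length w), xs (length w)) \<in> accept X"
    using H unfolding aut_hom_def by (simp add: track_def xs_def)
  ultimately show ?thesis by (simp add: accepting_path_def is_path_def)
qed


theorem corollary8:
  fixes C :: "('o, 'm) dcat" and X :: "('o, 'm, 'x) automaton" and G :: "('o, 'm, 'y) automaton"
  assumes "dcategory C" and "is_automaton C X" and "is_track_object C G"
  shows "in_Lang C X G \<longleftrightarrow>
    (\<exists>w Ao Aa. accepting_path C X w Ao Aa \<and> aut_iso C G (track C w (fst \<circ> Ao) (fst \<circ> Aa)))"
proof
  have C: "category C" using assms(1) by (simp add: dcategory_def)
  assume "in_Lang C X G"
  then obtain w Fo Fa \<eta> where P: "is_path C w Fo Fa" and iso: "aut_iso C G (track C w Fo Fa)"
      and h: "aut_hom C G X \<eta>"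
    by (auto simp: in_Lang_def is_track_object_def)
  from iso obtain \<theta> where th: "aut_hom C (track C w Fo Fa) G \<theta>" by (auto simp: aut_iso_def)
  have H: "aut_hom C (track C w Fo Fa) X (\<lambda>U x. \<eta> U (\<theta> U x))" by (rule aut_hom_comp[OF C th h])
  define xs where "xs = (\<lambda>i. (\<lambda>U x. \<eta> U (\<theta> U x)) (Fo i) (tr_rel C w Fo Fa (Fo i) `` {(i, idt C (Fo i))}))"
  have AP: "accepting_path C X w (\<lambda>i. (Fo i, xs i)) (\<lambda>e. (Fa e, xs (snd e)))"
    using hom_to_path[OF C P[unfolded is_path_def] H] by (simp add: xs_def)
  have "fst \<circ> (\<lambda>i. (Fo i, xs i)) = Fo" "fst \<circ> (\<lambda>e. (Fa e, xs (snd e))) = Fa" by (auto simp: fun_eq_iff)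
  thus "\<exists>w Ao Aa. accepting_path C X w Ao Aa \<and> aut_iso C G (track C w (fst \<circ> Ao) (fst \<circ> Aa))"
    using AP iso by metis
next
  have C: "category C" using assms(1) by (simp add: dcategory_def)
  assume "\<exists>w Ao Aa. accepting_path C X w Ao Aa \<and> aut_iso C G (track C w (fst \<circ> Ao) (fst \<circ> Aa))"
  then obtain w Ao Aa where AP: "accepting_path C X w Ao Aa"
      and iso: "aut_iso C G (track C w (fst \<circ> Ao) (fst \<circ> Aa))" by blast
  from iso obtain \<theta> where th: "aut_hom C G (track C w (fst \<circ> Ao) (fst \<circ> Aa)) \<theta>" by (auto simp: aut_iso_def)
  hence Tr: "is_automaton C (track C w (fst \<circ> Ao) (fst \<circ> Aa))" by (simp add: aut_hom_def)
  obtain \<eta> where h: "aut_hom C (track C w (fst \<circ> Ao) (fst \<circ> Aa)) X \<eta>"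
    using path_to_hom[OF C assms(2) _ _ _ Tr] AP by (auto simp: accepting_path_def is_path_def)
  have "aut_hom C G X (\<lambda>U x. \<eta> U (\<theta> U x))" by (rule aut_hom_comp[OF C th h])
  thus "in_Lang C X G" using assms(3) by (auto simp: in_Lang_def)
qed

end
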